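(* In the setting described in the context, assume there exist $\hat{i}_0\in I$ and $j\in J_{\hat{i}_0}$ with $\hat{x}_j\neq0$. For each $\hat{i}\in I$ let $t_{\hat{i}}$ be the optimal value and $\alpha^{(\hat{i})}$ an optimal solution of \[ \min_{\alpha}\ \sum_{i\in I}\xi_i\|\alpha_i-\hat{\alpha}_i\| \] subject to $\sum_{j\in J}a_{\hat{i}j}\hat{x}_j-\sum_{j\in J_{\hat{i}}}\alpha_{\hat{i}j}|\hat{x}_j|=b_{\hat{i}}$; $\sum_{j\in J}a_{ij}\hat{x}_j-\sum_{j\in J_i}\alpha_{ij}|\hat{x}_j|\ge b_i$ for all $i\in I$; $\alpha_{ij}\ge0$ for all $j\in J_i,i\in I$. Let $i^*\in\arg\min_{\hat{i}\in I}t_{\hat{i}}$ and $\alpha^*=\alpha^{(i^* )}$. Then the optimal value of RLO-IU-SD is $t_{i^*}$, and there exists an optimal solution of RLO-IU-SD with $\alpha_i=\alpha^*_i$ for all $i\in I$, $c=\bar{a}_{i^*}(\alpha^*_{i^*},\hat{x})$, and $\pi=e_{i^*}$. Moreover, if for every $i\in I$ either $b_i>0$ or $a_{ij}\neq0$ for some $j\in J\setminus J_i$, then this solution satisfies $c\neq0$ and $\bar{a}_i(\alpha_i,x)\neq0$ for all $i\in I$ and all $x\in\mathbb{R}^n$.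
   Context: Let $I=\{1,\dots,m\}$, $J=\{1,\dots,n\}$. Given are $a_{ij}\in\mathbb{R}$, $b\in\mathbb{R}^m$, nonempty index sets $J_i\subseteq J$ ($i\in I$), an observed point $\hat{x}\in\mathbb{R}^n$, prior vectors $\hat{\alpha}_i\in\mathbb{R}^{|J_i|}$, real weights $\xi_i$ ($i\in I$), and a norm $\|\cdot\|$. Let $\mathrm{sgn}(t)=1$ if $t\ge0$ and $-1$ otherwise, and $e_i$ the $i$-th unit vector of $\mathbb{R}^m$. For $\alpha_i=(\alpha_{ij})_{j\in J_i}\ge0$ and $x\in\mathbb{R}^n$, $\bar{a}_i(\alpha_i,x)\in\mathbb{R}^n$ has components $\bar{a}_{ij}(\alpha_i,x)=a_{ij}-\mathrm{sgn}(x_j)\alpha_{ij}$ if $j\in J_i$ and $a_{ij}$ if $j\in J\setminus J_i$. The problem RLO-IU-SD is \[ \min_{\alpha,c,u,\pi,\lambda,\mu}\ \sum_{i\in I}\xi_i\|\alpha_i-\hat{\alpha}_i\| \] subject to: $\sum_{j\in J}c_j\hat{x}_j-\sum_{i\in I}b_i\pi_i=0$; $\alpha_{ij}\hat{x}_j+u_{ij}\ge0$ and $-\alpha_{ij}\hat{x}_j+u_{ij}\ge0$ for all $j\in J_i,i\in I$; $\sum_{j\in J}a_{ij}\hat{x}_j-\sum_{j\in J_i}u_{ij}\ge b_i$ for all $i\in I$; $\alpha_{ij}\ge0$ for all $j\in J_i,i\in I$; $\sum_{i\in I}\pi_i=1$; $\sum_{i\in I}a_{ij}\pi_i+\sum_{i\in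 I:j\in J_i}\alpha_{ij}(\lambda_{ij}-\mu_{ij})=c_j$ for all $j\in J$; $\pi_i=\lambda_{ij}+\mu_{ij}$ for all $j\in J_i,i\in I$; $\pi_i,\lambda_{ij},\mu_{ij}\ge0$ for all $j\in J_i,i\in I$. Here $c\in\mathbb{R}^n$, $\pi\in\mathbb{R}^m$. *)

theory Defs
  imports "HOL-Analysis.Analysis"
begin

text \<open>Index sets I and J are the finite types 'm and 'n (I = UNIV, J = UNIV).
  Vectors are functions on these types.  For alpha, u, lambda, mu, the value at
  (i,j) with j outside J i is irrelevant.\<close>

definition sgnp :: "real \<Rightarrow> real" where
  "sgnp t = (if t \<ge> 0 then 1 else -1)"

definition abar :: "('m \<Rightarrow> 'n \<Rightarrow> real) \<Rightarrow> ('m \<Rightarrow> 'n set) \<Rightarrow> 'm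
    \<Rightarrow> ('n \<Rightarrow> real) \<Rightarrow> ('n \<Rightarrow> real) \<Rightarrow> ('n \<Rightarrow> real)" where
  "abar a J i al x = (\<lambda>j. if j \<in> J i then a i j - sgnp (x j) * al j else a i j)"

text \<open>A vector of R^S (coordinates in S) represented as a function vanishing outside S.\<close>
definition vec_on :: "'n set \<Rightarrow> ('n \<Rightarrow> real) \<Rightarrow> ('n \<Rightarrow> real)" where
  "vec_on S v = (\<lambda>j. if j \<in> S then v j else 0)"

definition is_norm_on :: "'n set \<Rightarrow> (('n \<Rightarrow> real) \<Rightarrow> real) \<Rightarrow> bool" where
  "is_norm_on S N \<longleftrightarrow>
     (\<forall>v. (\<forall>j. j \<notin> S \<longrightarrow> v j = 0) \<longrightarrow> N v \<ge> 0 \<and> (N v = 0 \<longleftrightarrow> v = (\<lambda>_. 0))) \<and>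
     (\<forall>v r. (\<forall>j. j \<notin> S \<longrightarrow> v j = 0) \<longrightarrow> N (\<lambda>j. r * v j) = \<bar>r\<bar> * N v) \<and>
     (\<forall>v w. (\<forall>j. j \<notin> S \<longrightarrow> v j = 0) \<longrightarrow> (\<forall>j. j \<notin> S \<longrightarrow> w j = 0) \<longrightarrow>
        N (\<lambda>j. v j + w j) \<le> N v + N w)"

definition objective :: "('m::finite \<Rightarrow> real) \<Rightarrow> ('n set \<Rightarrow> ('n \<Rightarrow> real) \<Rightarrow> real)
    \<Rightarrow> ('m \<Rightarrow> 'n set) \<Rightarrow> ('m \<Rightarrow> 'n \<Rightarrow> real) \<Rightarrow> ('m \<Rightarrow> 'n \<Rightarrow> real) \<Rightarrow> real" where
  "objective xi nrm J ahat al =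
     (\<Sum>i\<in>UNIV. xi i * nrm (J i) (vec_on (J i) (\<lambda>j. al i j - ahat i j)))"

definition rlo_feasible :: "('m::finite \<Rightarrow> 'n::finite \<Rightarrow> real) \<Rightarrow> ('m \<Rightarrow> real)
    \<Rightarrow> ('m \<Rightarrow> 'n set) \<Rightarrow> ('n \<Rightarrow> real)
    \<Rightarrow> ('m \<Rightarrow> 'n \<Rightarrow> real) \<Rightarrow> ('n \<Rightarrow> real) \<Rightarrow> ('m \<Rightarrow> 'n \<Rightarrow> real) \<Rightarrow> ('m \<Rightarrow> real)
    \<Rightarrow> ('m \<Rightarrow> 'n \<Rightarrow> real) \<Rightarrow> ('m \<Rightarrow> 'n \<Rightarrow> real) \<Rightarrow> bool" where
  "rlo_feasible a b J xh al c u p lam mu \<longleftrightarrow>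
     (\<Sum>j\<in>UNIV. c j * xh j) - (\<Sum>i\<in>UNIV. b i * p i) = 0 \<and>
     (\<forall>i. \<forall>j\<in>J i. al i j * xh j + u i j \<ge> 0 \<and> - al i j * xh j + u i j \<ge> 0) \<and>
     (\<forall>i. (\<Sum>j\<in>UNIV. a i j * xh j) - (\<Sum>j\<in>J i. u i j) \<ge> b i) \<and>
     (\<forall>i. \<forall>j\<in>J i. al i j \<ge> 0) \<and>
     (\<Sum>i\<in>UNIV. p i) = 1 \<and>
     (\<forall>j. (\<Sum>i\<in>UNIV. a i j * p i) + (\<Sum>i\<in>{i. j \<in> J i}. al i j * (lam i j - mu i j)) = c j) \<and>
     (\<forall>i. \<forall>j\<in>J i. p i = lam i j + mu i j) \<and>
     (\<forall>i. p i \<ge> 0) \<and>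
     (\<forall>i. \<forall>j\<in>J i. lam i j \<ge> 0 \<and> mu i j \<ge> 0)"

definition rlo_optimal where
  "rlo_optimal a b J xh xi nrm ahat al c u p lam mu \<longleftrightarrow>
     rlo_feasible a b J xh al c u p lam mu \<and>
     (\<forall>al' c' u' p' lam' mu'. rlo_feasible a b J xh al' c' u' p' lam' mu' \<longrightarrow>
        objective xi nrm J ahat al \<le> objective xi nrm J ahat al')"

text \<open>Optimal value of RLO-IU-SD (+infinity if infeasible).\<close>
definition rlo_value where
  "rlo_value a b J xh xi nrm ahat =
     Inf {ereal (objective xi nrm J ahat al) | al c u p lam mu.
            rlo_feasible a b J xh al c u p lam mu}"

definition sub_feasible :: "('m::finite \<Rightarrow> 'n::finite \<Rightarrow> real) \<Rightarrow> ('m \<Rightarrow> real)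
    \<Rightarrow> ('m \<Rightarrow> 'n set) \<Rightarrow> ('n \<Rightarrow> real) \<Rightarrow> 'm \<Rightarrow> ('m \<Rightarrow> 'n \<Rightarrow> real) \<Rightarrow> bool" where
  "sub_feasible a b J xh ih al \<longleftrightarrow>
     (\<Sum>j\<in>UNIV. a ih j * xh j) - (\<Sum>j\<in>J ih. al ih j * \<bar>xh j\<bar>) = b ih \<and>
     (\<forall>i. (\<Sum>j\<in>UNIV. a i j * xh j) - (\<Sum>j\<in>J i. al i j * \<bar>xh j\<bar>) \<ge> b i) \<and>
     (\<forall>i. \<forall>j\<in>J i. al i j \<ge> 0)"

definition sub_optimal where
  "sub_optimal a b J xh xi nrm ahat ih al \<longleftrightarrow>
     sub_feasible a b J xh ih al \<and>
     (\<forall>al'. sub_feasible a b J xh ih al' \<longrightarrow>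
        objective xi nrm J ahat al \<le> objective xi nrm J ahat al')"

text \<open>Optimal value of the subproblem (+infinity if infeasible).\<close>
definition sub_value where
  "sub_value a b J xh xi nrm ahat ih =
     Inf {ereal (objective xi nrm J ahat al) | al. sub_feasible a b J xh ih al}"

end

theory Submission imports Defs begin
lemma key:
  fixes a :: "'m::finite \<Rightarrow> 'n::finite \<Rightarrow> real"
  assumes F: "rlo_feasible a b J xh al c u p lam mu"
  shows "\<exists>i. sub_feasible a b J xh i al"
proof -
  define s where "s i = (\<Sum>j\<in>UNIV. a i j * xh j) - (\<Sum>j\<in>J i. al i j * \<bar>xh j\<bar>)" for i
  have alnn: "\<And>i j. j \<in> J i \<Longrightarrow> al i j \<ge> 0" using F unfolding rlo_feasible_def by blast
  have s_ge: "s i \<ge> b i" for i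
  proof -
    have "(\<Sum>j\<in>J i. al i j * \<bar>xh j\<bar>) \<le> (\<Sum>j\<in>J i. u i j)"
    proof (rule sum_mono)
      fix j assume j: "j \<in> J i"
      have "al i j * xh j + u i j \<ge> 0" "- al i j * xh j + u i j \<ge> 0"
        using F j unfolding rlo_feasible_def by auto
      moreover have "al i j * \<bar>xh j\<bar> = \<bar>al i j * xh j\<bar>" using alnn[OF j] by (simp add: abs_mult)
      ultimately show "al i j * \<bar>xh j\<bar> \<le> u i j" by linarith
    qed
    moreover have "(\<Sum>j\<in>UNIV. a i j * xh j) - (\<Sum>j\<in>J i. u i j) \<ge> b i"
      using F unfolding rlo_feasible_def by blast
    ultimately show ?thesis unfolding s_def by linarith
  qed
  have cdef: "\<And>j. c j = (\<Sum>i\<in>UNIV. a i j * p i) + (\<Sum>i\<in>{i. j \<in> J i}. al i j * (lam i j - mu i j))"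
    using F unfolding rlo_feasible_def by metis
  have pnn: "\<And>i. p i \<ge> 0" and psum: "(\<Sum>i\<in>UNIV. p i) = 1"
    using F unfolding rlo_feasible_def by blast+
  have plm: "\<And>i j. j \<in> J i \<Longrightarrow> p i = lam i j + mu i j"
    and lmnn: "\<And>i j. j \<in> J i \<Longrightarrow> lam i j \<ge> 0 \<and> mu i j \<ge> 0"
    using F unfolding rlo_feasible_def by blast+
  have beq: "(\<Sum>i\<in>UNIV. b i * p i) = (\<Sum>j\<in>UNIV. c j * xh j)"
    using F unfolding rlo_feasible_def by linarith
  define g where "g i j = (if j \<in> J i then al i j * (lam i j - mu i j) * xh j else 0)" for i j
  have "(\<Sum>j\<in>UNIV. c j * xh j) = (\<Sum>j\<in>UNIV. (\<Sum>i\<in>UNIV. a i j * p i * xh j) + (\<Sum>i\<in>UNIV. g i j))"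
  proof (rule sum.cong[OF refl])
    fix j
    have "(\<Sum>i\<in>{i. j \<in> J i}. al i j * (lam i j - mu i j)) * xh j
        = (\<Sum>i\<in>{i\<in>UNIV. j \<in> J i}. al i j * (lam i j - mu i j) * xh j)"
      by (simp add: sum_distrib_right)
    also have "\<dots> = (\<Sum>i\<in>UNIV. g i j)"
      unfolding g_def by (rule sum.inter_filter) simp
    finally show "c j * xh j = (\<Sum>i\<in>UNIV. a i j * p i * xh j) + (\<Sum>i\<in>UNIV. g i j)"
      by (simp add: cdef distrib_right sum_distrib_right)
  qed
  also have "\<dots> = (\<Sum>i\<in>UNIV. p i * (\<Sum>j\<in>UNIV. a i j * xh j) + (\<Sum>j\<in>UNIV. g i j))"
  proof -
    have "(\<Sum>j\<in>UNIV. (\<Sum>i\<in>UNIV. a i j * p i * xh j) + (\<Sum>i\<in>UNIV. g i j))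
        = (\<Sum>j\<in>UNIV. \<Sum>i\<in>UNIV. a i j * p i * xh j) + (\<Sum>j\<in>UNIV. \<Sum>i\<in>UNIV. g i j)"
      by (rule sum.distrib)
    also have "\<dots> = (\<Sum>i\<in>UNIV. \<Sum>j\<in>UNIV. a i j * p i * xh j) + (\<Sum>i\<in>UNIV. \<Sum>j\<in>UNIV. g i j)"
      by (subst sum.swap, subst (2) sum.swap, rule refl)
    also have "\<dots> = (\<Sum>i\<in>UNIV. (\<Sum>j\<in>UNIV. a i j * p i * xh j) + (\<Sum>j\<in>UNIV. g i j))"
      by (rule sum.distrib[symmetric])
    also have "\<dots> = (\<Sum>i\<in>UNIV. p i * (\<Sum>j\<in>UNIV. a i j * xh j) + (\<Sum>j\<in>UNIV. g i j))"
      by (intro sum.cong refl) (simp add: sum_distrib_left mult_ac)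
    finally show ?thesis .
  qed
  finally have ceq: "(\<Sum>j\<in>UNIV. c j * xh j) = \<dots>" .
  have gle: "(\<Sum>j\<in>UNIV. g i j) \<ge> - p i * (\<Sum>j\<in>J i. al i j * \<bar>xh j\<bar>)" for i
  proof -
    have "(\<Sum>j\<in>UNIV. g i j) = (\<Sum>j\<in>{j\<in>UNIV. j \<in> J i}. al i j * (lam i j - mu i j) * xh j)"
      unfolding g_def by (rule sum.inter_filter[symmetric]) simp
    also have "\<dots> = (\<Sum>j\<in>J i. al i j * (lam i j - mu i j) * xh j)" by simp
    also have "\<dots> \<ge> (\<Sum>j\<in>J i. - p i * (al i j * \<bar>xh j\<bar>))"
    proof (rule sum_mono)
      fix j assume j: "j \<in> J i"
      have h1: "\<bar>(lam i j - mu i j) * xh j\<bar> \<le> p i * \<bar>xh j\<bar>"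
      proof -
        have "\<bar>lam i j - mu i j\<bar> \<le> p i" using lmnn[OF j] plm[OF j] by linarith
        then show ?thesis by (simp add: abs_mult mult_right_mono)
      qed
      have "\<bar>al i j * ((lam i j - mu i j) * xh j)\<bar> \<le> al i j * (p i * \<bar>xh j\<bar>)"
        using alnn[OF j] h1 by (simp add: abs_mult mult_left_mono)
      then show "- p i * (al i j * \<bar>xh j\<bar>) \<le> al i j * (lam i j - mu i j) * xh j"
        by (simp add: mult_ac abs_le_iff)
    qed
    finally show ?thesis by (simp add: sum_distrib_left)
  qed
  have "(\<Sum>i\<in>UNIV. p i * (s i - b i)) \<le> 0"
  proof -
    have "(\<Sum>i\<in>UNIV. p i * (s i - b i)) = (\<Sum>i\<in>UNIV. p i * (\<Sum>j\<in>UNIV. a i j * xh j) - p i * (\<Sum>j\<in>J i. al i j * \<bar>xh j\<bar>)) - (\<Sum>i\<in>UNIV. b i * p i)"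
      unfolding s_def by (simp add: algebra_simps sum_subtractf sum.distrib)
    also have "\<dots> \<le> (\<Sum>i\<in>UNIV. p i * (\<Sum>j\<in>UNIV. a i j * xh j) + (\<Sum>j\<in>UNIV. g i j)) - (\<Sum>i\<in>UNIV. b i * p i)"
      by (intro diff_right_mono sum_mono) (use gle in force)
    also have "\<dots> = 0" using beq ceq by simp
    finally show ?thesis .
  qed
  moreover have nn: "\<forall>i\<in>UNIV. 0 \<le> p i * (s i - b i)" using pnn s_ge by simp
  ultimately have z: "\<forall>i\<in>UNIV. p i * (s i - b i) = 0"
    using sum_nonneg_eq_0_iff[of UNIV "\<lambda>i. p i * (s i - b i)"] sum_nonneg[of UNIV "\<lambda>i. p i * (s i - b i)"]
    by simp
  obtain i where "p i \<noteq> 0"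
  proof (rule ccontr)
    assume "\<not> thesis"
    with that have "\<forall>i. p i = 0" by blast
    then have "(\<Sum>i\<in>UNIV. p i) = 0" by simp
    with psum show False by simp
  qed
  with z have "s i = b i" by (metis UNIV_I mult_eq_0_iff eq_iff_diff_eq_0)
  then show ?thesis
    unfolding sub_feasible_def using s_ge alnn unfolding s_def by (intro exI[of _ i]) auto
qed
theorem theorem4:
  fixes a :: "'m::finite \<Rightarrow> 'n::finite \<Rightarrow> real"
    and b :: "'m \<Rightarrow> real"
    and J :: "'m \<Rightarrow> 'n set"
    and xh :: "'n \<Rightarrow> real"
    and ahat :: "'m \<Rightarrow> 'n \<Rightarrow> real"
    and xi :: "'m \<Rightarrow> real"
    and nrm :: "'n set \<Rightarrow> ('n \<Rightarrow> real) \<Rightarrow> real"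
    and t :: "'m \<Rightarrow> ereal"
    and istar :: 'm
    and astar :: "'m \<Rightarrow> 'n \<Rightarrow> real"
  assumes J_ne: "\<forall>i. J i \<noteq> {}"
    and norm: "\<forall>S. is_norm_on S (nrm S)"
    and nz: "\<exists>i0. \<exists>j\<in>J i0. xh j \<noteq> 0"
    and t_def: "\<forall>ih. t ih = sub_value a b J xh xi nrm ahat ih"
    and istar_min: "\<forall>ih. t istar \<le> t ih"
    and astar_opt: "sub_optimal a b J xh xi nrm ahat istar astar"
  shows "rlo_value a b J xh xi nrm ahat = t istar \<and>
    (\<exists>u lam mu. rlo_optimal a b J xh xi nrm ahat astar
        (abar a J istar (astar istar) xh) u (\<lambda>i. if i = istar then 1 else 0) lam mu) \<and>
    ((\<forall>i. b i > 0 \<or> (\<exists>j. j \<notin> J i \<and> a i j \<noteq> 0)) \<longrightarrow>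
       abar a J istar (astar istar) xh \<noteq> (\<lambda>_. 0) \<and>
       (\<forall>i x. abar a J i (astar i) x \<noteq> (\<lambda>_. 0)))"
proof -
  have sfa: "sub_feasible a b J xh istar astar" using astar_opt unfolding sub_optimal_def by blast
  have lower: "t istar \<le> ereal (objective xi nrm J ahat al')" if "sub_feasible a b J xh ih al'" for ih al'
  proof -
    have "t ih \<le> ereal (objective xi nrm J ahat al')"
      unfolding t_def[rule_format] sub_value_def using that by (intro Inf_lower) blast
    then show ?thesis using istar_min by (meson order_trans)
  qed
  have tval: "t istar = ereal (objective xi nrm J ahat astar)"
  proof (rule antisym)
    show "t istar \<le> ereal (objective xi nrm J ahat astar)" using lower[OF sfa] .
    show "ereal (objective xi nrm J ahat astar) \<le> t istar"
      unfolding t_def[rule_format] sub_value_def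
      using astar_opt unfolding sub_optimal_def by (intro Inf_greatest) auto
  qed
  define P :: "'m \<Rightarrow> real" where "P i = (if i = istar then 1 else 0)" for i
  define c where "c = abar a J istar (astar istar) xh"
  define u where "u i j = astar i j * \<bar>xh j\<bar>" for i j
  define lam where "lam i j = (if i = istar then (1 - sgnp (xh j)) / 2 else 0)" for i j
  define mu where "mu i j = (if i = istar then (1 + sgnp (xh j)) / 2 else 0)" for i j
  have sg: "sgnp r * r = \<bar>r\<bar>" for r unfolding sgnp_def by auto
  have sg2: "sgnp r = 1 \<or> sgnp r = -1" for r unfolding sgnp_def by auto
  have annc: "\<forall>i. \<forall>j\<in>J i. astar i j \<ge> 0" using sfa unfolding sub_feasible_def by blast
  have feas: "rlo_feasible a b J xh astar c u P lam mu"
    unfolding rlo_feasible_def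
  proof (intro conjI)
    have cx: "c j * xh j = a istar j * xh j - (if j \<in> J istar then astar istar j * \<bar>xh j\<bar> else 0)" for j
      unfolding c_def abar_def using sg[of "xh j"] by (auto simp: algebra_simps)
    have "(\<Sum>j\<in>UNIV. c j * xh j) = (\<Sum>j\<in>UNIV. a istar j * xh j) - (\<Sum>j\<in>J istar. astar istar j * \<bar>xh j\<bar>)"
      unfolding cx sum_subtractf by (simp add: sum.If_cases)
    also have "\<dots> = b istar" using sfa unfolding sub_feasible_def by blast
    finally show "(\<Sum>j\<in>UNIV. c j * xh j) - (\<Sum>i\<in>UNIV. b i * P i) = 0"
      unfolding P_def by (simp add: if_distrib cong: if_cong)
    show "\<forall>i. \<forall>j\<in>J i. 0 \<le> astar i j * xh j + u i j \<and> 0 \<le> - astar i j * xh j + u i j"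
    proof (intro allI ballI)
      fix i j assume "j \<in> J i"
      then have "astar i j \<ge> 0" using annc by blast
      then have "\<bar>astar i j * xh j\<bar> = u i j" unfolding u_def by (simp add: abs_mult)
      then show "0 \<le> astar i j * xh j + u i j \<and> 0 \<le> - astar i j * xh j + u i j" by linarith
    qed
    show "\<forall>i. b i \<le> (\<Sum>j\<in>UNIV. a i j * xh j) - sum (u i) (J i)"
      using sfa unfolding sub_feasible_def u_def by blast
    show "\<forall>i. \<forall>j\<in>J i. 0 \<le> astar i j" using annc .
    show "sum P UNIV = 1" unfolding P_def by simp
    show "\<forall>j. (\<Sum>i\<in>UNIV. a i j * P i) + (\<Sum>i\<in>{i. j \<in> J i}. astar i j * (lam i j - mu i j)) = c j"
    proof
      fix j
      have e1: "(\<Sum>i\<in>UNIV. a i j * P i) = a istar j" unfolding P_def by (simp add: if_distrib cong: if_cong)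
      have "(\<Sum>i\<in>{i. j \<in> J i}. astar i j * (lam i j - mu i j))
          = (\<Sum>i\<in>{i. j \<in> J i}. if i = istar then - astar istar j * sgnp (xh j) else 0)"
        unfolding lam_def mu_def by (intro sum.cong refl) (auto simp: field_simps)
      also have "\<dots> = (if j \<in> J istar then - astar istar j * sgnp (xh j) else 0)"
        by (simp add: sum.delta)
      finally show "(\<Sum>i\<in>UNIV. a i j * P i) + (\<Sum>i\<in>{i. j \<in> J i}. astar i j * (lam i j - mu i j)) = c j"
        unfolding e1 c_def abar_def by (auto simp: algebra_simps)
    qed
    show "\<forall>i. \<forall>j\<in>J i. P i = lam i j + mu i j" unfolding P_def lam_def mu_def by (auto simp: field_simps)
    show "\<forall>i. 0 \<le> P i" unfolding P_def by auto
    show "\<forall>i. \<forall>j\<in>J i. 0 \<le> lam i j \<and> 0 \<le> mu i j"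
      unfolding lam_def mu_def using sg2 by (auto simp: sgnp_def)
  qed
  have lowrlo: "t istar \<le> ereal (objective xi nrm J ahat al')"
    if "rlo_feasible a b J xh al' c' u' p' lam' mu'" for al' c' u' p' lam' mu'
    using key[OF that] lower by blast
  have val: "rlo_value a b J xh xi nrm ahat = t istar"
  proof (rule antisym)
    show "rlo_value a b J xh xi nrm ahat \<le> t istar"
      unfolding rlo_value_def tval using feas by (intro Inf_lower) blast
    show "t istar \<le> rlo_value a b J xh xi nrm ahat"
      unfolding rlo_value_def using lowrlo by (intro Inf_greatest) blast
  qed
  have opt: "rlo_optimal a b J xh xi nrm ahat astar c u P lam mu"
    unfolding rlo_optimal_def using feas lowrlo tval by auto
  have third: "abar a J i (astar i) x \<noteq> (\<lambda>_. 0)"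
    if hyp: "\<forall>i. b i > 0 \<or> (\<exists>j. j \<notin> J i \<and> a i j \<noteq> 0)" for i x
  proof
    assume z: "abar a J i (astar i) x = (\<lambda>_. 0)"
    then have zj: "abar a J i (astar i) x j = 0" for j by simp
    from hyp have "b i > 0 \<or> (\<exists>j. j \<notin> J i \<and> a i j \<noteq> 0)" by blast
    then show False
    proof
      assume bp: "b i > 0"
      have aj: "a i j = (if j \<in> J i then sgnp (x j) * astar i j else 0)" for j
        using zj[of j] unfolding abar_def by (auto split: if_splits)
      have "(\<Sum>j\<in>UNIV. a i j * xh j) = (\<Sum>j\<in>J i. sgnp (x j) * astar i j * xh j)"
      proof -
        have "(\<Sum>j\<in>UNIV. a i j * xh j) = (\<Sum>j\<in>UNIV. if j \<in> J i then sgnp (x j) * astar i j * xh j else 0)"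
          by (intro sum.cong refl) (simp add: aj)
        then show ?thesis by (simp add: sum.If_cases)
      qed
      also have "\<dots> \<le> (\<Sum>j\<in>J i. astar i j * \<bar>xh j\<bar>)"
      proof (rule sum_mono)
        fix j assume "j \<in> J i"
        then have "astar i j \<ge> 0" using annc by blast
        moreover have "sgnp (x j) * xh j \<le> \<bar>xh j\<bar>" using sg2[of "x j"] by auto
        ultimately show "sgnp (x j) * astar i j * xh j \<le> astar i j * \<bar>xh j\<bar>"
          using mult_left_mono by (metis mult.assoc mult.left_commute)
      qed
      finally have "(\<Sum>j\<in>UNIV. a i j * xh j) - (\<Sum>j\<in>J i. astar i j * \<bar>xh j\<bar>) \<le> 0" by simp
      moreover have "(\<Sum>j\<in>UNIV. a i j * xh j) - (\<Sum>j\<in>J i. astar i j * \<bar>xh j\<bar>) \<ge> b i"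
        using sfa unfolding sub_feasible_def by blast
      ultimately show False using bp by linarith
    next
      assume "\<exists>j. j \<notin> J i \<and> a i j \<noteq> 0"
      then obtain j where "j \<notin> J i" "a i j \<noteq> 0" by blast
      then show False using zj[of j] unfolding abar_def by simp
    qed
  qed
  show ?thesis
    using val opt third unfolding c_def P_def by blast
qed

end
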